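(* Let $\mathcal{A}$ be an abelian category and consider a commutative diagram in $\mathcal{A}$ consisting of exact sequences $Q_1\xrightarrow{a}P_1\xrightarrow{p_1}F_1\to0$ and $Q_2\xrightarrow{d}P_2\xrightarrow{p_2}F_2\to 0$, together with morphisms $b:Q_1\to Q_2$, $c:P_1\to P_2$ and $h:F_1\to F_2$ such that $ca=db$ and $hp_1=p_2c$. Then for any object $M\in\mathcal{A}$ the following are equivalent: (1) the induced map $\mathrm{Hom}(F_2,M)\to\mathrm{Hom}(F_1,M)$, $\psi\mapsto\psi h$, is surjective; (2) let $\mu:Q_1\oplus Q_2\to P_1\oplus Q_2$ be the morphism with components $a:Q_1\to P_1$, $0:Q_2\to P_1$, $b:Q_1\to Q_2$, $-1:Q_2\to Q_2$, and let $\nu:P_1\oplus Q_2\to P_2$ be the morphism with components $c:P_1\to P_2$ and $-d:Q_2\to P_2$; then for every morphism $\varphi:P_1\oplus Q_2\to M$ with $\varphi\mu=0$ there exists a morphism $\gamma:P_2\to M$ with $\gamma\nu=\varphi$. *)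

theory Defs
  imports Main
begin

text \<open>A category with additive structure on hom-sets, given concretely.
  Morphisms carry their domain and codomain. Comp g f is g after f.\<close>

record ('o, 'm) acat =
  Obj  :: "'o set"
  Arr  :: "'m set"
  Dom  :: "'m \<Rightarrow> 'o"
  Cod  :: "'m \<Rightarrow> 'o"
  Id   :: "'o \<Rightarrow> 'm"
  Comp :: "'m \<Rightarrow> 'm \<Rightarrow> 'm"
  Add  :: "'m \<Rightarrow> 'm \<Rightarrow> 'm"
  Zero :: "'o \<Rightarrow> 'o \<Rightarrow> 'm"
  Neg  :: "'m \<Rightarrow> 'm"

definition hom :: "('o, 'm) acat \<Rightarrow> 'o \<Rightarrow> 'o \<Rightarrow> 'm set" where
  "hom C x y = {f \<in> Arr C. Dom C f = x \<and> Cod C f = y}"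

definition category :: "('o, 'm) acat \<Rightarrow> bool" where
  "category C \<longleftrightarrow>
     (\<forall>f \<in> Arr C. Dom C f \<in> Obj C \<and> Cod C f \<in> Obj C) \<and>
     (\<forall>x \<in> Obj C. Id C x \<in> hom C x x) \<and>
     (\<forall>x \<in> Obj C. \<forall>y \<in> Obj C. \<forall>z \<in> Obj C. \<forall>f \<in> hom C x y. \<forall>g \<in> hom C y z.
        Comp C g f \<in> hom C x z) \<and>
     (\<forall>x \<in> Obj C. \<forall>y \<in> Obj C. \<forall>z \<in> Obj C. \<forall>w \<in> Obj C.
        \<forall>f \<in> hom C x y. \<forall>g \<in> hom C y z. \<forall>h \<in> hom C z w.
        Comp C h (Comp C g f) = Comp C (Comp C h g) f) \<and>
     (\<forall>x \<in> Obj C. \<forall>y \<in> Obj C. \<forall>f \<in> hom C x y.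
        Comp C (Id C y) f = f \<and> Comp C f (Id C x) = f)"

definition preadditive :: "('o, 'm) acat \<Rightarrow> bool" where
  "preadditive C \<longleftrightarrow> category C \<and>
     (\<forall>x \<in> Obj C. \<forall>y \<in> Obj C.
        Zero C x y \<in> hom C x y \<and>
        (\<forall>f \<in> hom C x y. \<forall>g \<in> hom C x y. Add C f g \<in> hom C x y) \<and>
        (\<forall>f \<in> hom C x y. Neg C f \<in> hom C x y) \<and>
        (\<forall>f \<in> hom C x y. \<forall>g \<in> hom C x y. \<forall>h \<in> hom C x y.
            Add C (Add C f g) h = Add C f (Add C g h)) \<and>
        (\<forall>f \<in> hom C x y. \<forall>g \<in> hom C x y. Add C f g = Add C g f) \<and>
        (\<forall>f \<in> hom C x y. Add C f (Zero C x y) = f) \<and>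
        (\<forall>f \<in> hom C x y. Add C f (Neg C f) = Zero C x y)) \<and>
     (\<forall>x \<in> Obj C. \<forall>y \<in> Obj C. \<forall>z \<in> Obj C.
        \<forall>f \<in> hom C x y. \<forall>f' \<in> hom C x y. \<forall>g \<in> hom C y z. \<forall>g' \<in> hom C y z.
        Comp C g (Add C f f') = Add C (Comp C g f) (Comp C g f') \<and>
        Comp C (Add C g g') f = Add C (Comp C g f) (Comp C g' f))"

definition mono :: "('o, 'm) acat \<Rightarrow> 'm \<Rightarrow> bool" where
  "mono C f \<longleftrightarrow> f \<in> Arr C \<and>
     (\<forall>x \<in> Obj C. \<forall>g \<in> hom C x (Dom C f). \<forall>g' \<in> hom C x (Dom C f).
        Comp C f g = Comp C f g' \<longrightarrow> g = g')"

definition epi :: "('o, 'm) acat \<Rightarrow> 'm \<Rightarrow> bool" where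
  "epi C f \<longleftrightarrow> f \<in> Arr C \<and>
     (\<forall>x \<in> Obj C. \<forall>g \<in> hom C (Cod C f) x. \<forall>g' \<in> hom C (Cod C f) x.
        Comp C g f = Comp C g' f \<longrightarrow> g = g')"

definition is_kernel :: "('o, 'm) acat \<Rightarrow> 'm \<Rightarrow> 'm \<Rightarrow> bool" where
  "is_kernel C f k \<longleftrightarrow> f \<in> Arr C \<and> k \<in> Arr C \<and> Cod C k = Dom C f \<and>
     Comp C f k = Zero C (Dom C k) (Cod C f) \<and>
     (\<forall>x \<in> Obj C. \<forall>g \<in> hom C x (Dom C f). Comp C f g = Zero C x (Cod C f) \<longrightarrow>
        (\<exists>!u. u \<in> hom C x (Dom C k) \<and> Comp C k u = g))"

definition is_cokernel :: "('o, 'm) acat \<Rightarrow> 'm \<Rightarrow> 'm \<Rightarrow> bool" where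
  "is_cokernel C f q \<longleftrightarrow> f \<in> Arr C \<and> q \<in> Arr C \<and> Dom C q = Cod C f \<and>
     Comp C q f = Zero C (Dom C f) (Cod C q) \<and>
     (\<forall>x \<in> Obj C. \<forall>g \<in> hom C (Cod C f) x. Comp C g f = Zero C (Dom C f) x \<longrightarrow>
        (\<exists>!u. u \<in> hom C (Cod C q) x \<and> Comp C u q = g))"

definition zero_object :: "('o, 'm) acat \<Rightarrow> 'o \<Rightarrow> bool" where
  "zero_object C z \<longleftrightarrow> z \<in> Obj C \<and>
     (\<forall>x \<in> Obj C. (\<exists>!f. f \<in> hom C z x) \<and> (\<exists>!f. f \<in> hom C x z))"

definition is_biproduct :: "('o, 'm) acat \<Rightarrow> 'o \<Rightarrow> 'o \<Rightarrow> 'o \<Rightarrow> 'm \<Rightarrow> 'm \<Rightarrow> 'm \<Rightarrow> 'm \<Rightarrow> bool" where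
  "is_biproduct C A B S i1 i2 p1 p2 \<longleftrightarrow>
     A \<in> Obj C \<and> B \<in> Obj C \<and> S \<in> Obj C \<and>
     i1 \<in> hom C A S \<and> i2 \<in> hom C B S \<and> p1 \<in> hom C S A \<and> p2 \<in> hom C S B \<and>
     Comp C p1 i1 = Id C A \<and> Comp C p2 i2 = Id C B \<and>
     Comp C p1 i2 = Zero C B A \<and> Comp C p2 i1 = Zero C A B \<and>
     Add C (Comp C i1 p1) (Comp C i2 p2) = Id C S"

definition abelian :: "('o, 'm) acat \<Rightarrow> bool" where
  "abelian C \<longleftrightarrow> preadditive C \<and>
     (\<exists>z. zero_object C z) \<and>
     (\<forall>A \<in> Obj C. \<forall>B \<in> Obj C. \<exists>S i1 i2 p1 p2. is_biproduct C A B S i1 i2 p1 p2) \<and>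
     (\<forall>f \<in> Arr C. \<exists>k. is_kernel C f k) \<and>
     (\<forall>f \<in> Arr C. \<exists>q. is_cokernel C f q) \<and>
     (\<forall>f. mono C f \<longrightarrow> (\<exists>g. is_kernel C g f)) \<and>
     (\<forall>f. epi C f \<longrightarrow> (\<exists>g. is_cokernel C g f))"

text \<open>Exactness of  X --f--> Y --g--> Z  at Y: g f = 0 and im f = ker g, expressed as
  coker(f) o ker(g) = 0 (together with g f = 0).\<close>
definition exact :: "('o, 'm) acat \<Rightarrow> 'm \<Rightarrow> 'm \<Rightarrow> bool" where
  "exact C f g \<longleftrightarrow> f \<in> Arr C \<and> g \<in> Arr C \<and> Cod C f = Dom C g \<and>
     Comp C g f = Zero C (Dom C f) (Cod C g) \<and>
     (\<exists>k q. is_kernel C g k \<and> is_cokernel C f q \<and>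
        Comp C q k = Zero C (Dom C k) (Cod C q))"

end

theory Submission
  imports Defs
begin

locale padd =
  fixes C :: "('o, 'm) acat"
  assumes pa: "preadditive C"
begin

lemma cat: "category C" using pa unfolding preadditive_def by blast

lemma hom_obj: "f \<in> hom C x y \<Longrightarrow> x \<in> Obj C \<and> y \<in> Obj C"
  using cat unfolding category_def hom_def by auto

lemma arr_hom: "f \<in> Arr C \<Longrightarrow> f \<in> hom C (Dom C f) (Cod C f)"
  unfolding hom_def by auto

lemma comp[intro]: "f \<in> hom C x y \<Longrightarrow> g \<in> hom C y z \<Longrightarrow> Comp C g f \<in> hom C x z"
  using cat hom_obj unfolding category_def by metis

lemma assoc: "f \<in> hom C x y \<Longrightarrow> g \<in> hom C y z \<Longrightarrow> h \<in> hom C z w \<Longrightarrow>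
  Comp C h (Comp C g f) = Comp C (Comp C h g) f"
  using cat hom_obj unfolding category_def by metis

lemma idl: "f \<in> hom C x y \<Longrightarrow> Comp C (Id C y) f = f"
  using cat hom_obj unfolding category_def by metis
lemma idr: "f \<in> hom C x y \<Longrightarrow> Comp C f (Id C x) = f"
  using cat hom_obj unfolding category_def by metis

lemma zero_hom[intro]: "x \<in> Obj C \<Longrightarrow> y \<in> Obj C \<Longrightarrow> Zero C x y \<in> hom C x y"
  using pa unfolding preadditive_def by blast
lemma add_hom[intro]: "f \<in> hom C x y \<Longrightarrow> g \<in> hom C x y \<Longrightarrow> Add C f g \<in> hom C x y"
  using pa hom_obj unfolding preadditive_def by metis
lemma neg_hom[intro]: "f \<in> hom C x y \<Longrightarrow> Neg C f \<in> hom C x y"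
  using pa hom_obj unfolding preadditive_def by metis
lemma add_assoc: "f \<in> hom C x y \<Longrightarrow> g \<in> hom C x y \<Longrightarrow> h \<in> hom C x y \<Longrightarrow>
  Add C (Add C f g) h = Add C f (Add C g h)"
  using pa hom_obj unfolding preadditive_def by metis
lemma add_comm: "f \<in> hom C x y \<Longrightarrow> g \<in> hom C x y \<Longrightarrow> Add C f g = Add C g f"
  using pa hom_obj unfolding preadditive_def by metis
lemma add_zero: "f \<in> hom C x y \<Longrightarrow> Add C f (Zero C x y) = f"
  using pa hom_obj unfolding preadditive_def by metis
lemma add_neg: "f \<in> hom C x y \<Longrightarrow> Add C f (Neg C f) = Zero C x y"
  using pa hom_obj unfolding preadditive_def by metis
lemma zero_add: "f \<in> hom C x y \<Longrightarrow> Add C (Zero C x y) f = f"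
  by (metis add_comm add_zero hom_obj zero_hom)
lemma distl: "f \<in> hom C x y \<Longrightarrow> f' \<in> hom C x y \<Longrightarrow> g \<in> hom C y z \<Longrightarrow>
  Comp C g (Add C f f') = Add C (Comp C g f) (Comp C g f')"
  using pa hom_obj unfolding preadditive_def by metis
lemma distr: "f \<in> hom C x y \<Longrightarrow> g \<in> hom C y z \<Longrightarrow> g' \<in> hom C y z \<Longrightarrow>
  Comp C (Add C g g') f = Add C (Comp C g f) (Comp C g' f)"
  using pa hom_obj unfolding preadditive_def by metis

lemma cancel: assumes "f \<in> hom C x y" "Add C f f = f" shows "f = Zero C x y"
proof -
  have n: "Neg C f \<in> hom C x y" using assms neg_hom by blast
  have "Zero C x y = Add C f (Neg C f)" using assms add_neg by metis
  also have "\<dots> = Add C (Add C f f) (Neg C f)" using assms by simp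
  also have "\<dots> = Add C f (Add C f (Neg C f))" using assms n add_assoc by blast
  also have "\<dots> = f" using assms add_neg add_zero by metis
  finally show ?thesis by simp
qed

lemma neg_unique: assumes "f \<in> hom C x y" "g \<in> hom C x y" "Add C f g = Zero C x y"
  shows "g = Neg C f"
proof -
  have n: "Neg C f \<in> hom C x y" using assms neg_hom by blast
  have "g = Add C g (Add C f (Neg C f))" using assms add_neg add_zero by metis
  also have "\<dots> = Add C (Add C g f) (Neg C f)" using assms n add_assoc by metis
  also have "\<dots> = Add C (Add C f g) (Neg C f)" using assms add_comm by metis
  also have "\<dots> = Neg C f" using assms n zero_add by metis
  finally show ?thesis .
qed

lemma comp_zero_r: assumes "g \<in> hom C y z" "x \<in> Obj C" shows "Comp C g (Zero C x y) = Zero C x z"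
proof -
  have y: "y \<in> Obj C" "z \<in> Obj C" using assms hom_obj by auto
  have "Comp C g (Zero C x y) = Comp C g (Add C (Zero C x y) (Zero C x y))"
    using assms y by (simp add: add_zero zero_hom)
  also have "\<dots> = Add C (Comp C g (Zero C x y)) (Comp C g (Zero C x y))"
    using assms y distl zero_hom by metis
  finally show ?thesis using cancel[of "Comp C g (Zero C x y)" x z] assms y by auto
qed

lemma comp_zero_l: assumes "f \<in> hom C x y" "z \<in> Obj C" shows "Comp C (Zero C y z) f = Zero C x z"
proof -
  have y: "x \<in> Obj C" "y \<in> Obj C" using assms hom_obj by auto
  have "Comp C (Zero C y z) f = Comp C (Add C (Zero C y z) (Zero C y z)) f"
    using assms y by (simp add: add_zero zero_hom)
  also have "\<dots> = Add C (Comp C (Zero C y z) f) (Comp C (Zero C y z) f)"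
    using assms y distr zero_hom by metis
  finally show ?thesis using cancel[of "Comp C (Zero C y z) f" x z] assms y by auto
qed

lemma comp_neg_r: assumes "f \<in> hom C x y" "g \<in> hom C y z"
  shows "Comp C g (Neg C f) = Neg C (Comp C g f)"
proof -
  have o: "x \<in> Obj C" using assms hom_obj by auto
  have "Add C (Comp C g f) (Comp C g (Neg C f)) = Comp C g (Add C f (Neg C f))"
    using assms by (simp add: distl neg_hom)
  also have "\<dots> = Zero C x z" using assms o by (simp add: add_neg comp_zero_r)
  finally show ?thesis using neg_unique assms by blast
qed

lemma comp_neg_l: assumes "f \<in> hom C x y" "g \<in> hom C y z"
  shows "Comp C (Neg C g) f = Neg C (Comp C g f)"
proof -
  have o: "z \<in> Obj C" using assms hom_obj by auto
  have "Add C (Comp C g f) (Comp C (Neg C g) f) = Comp C (Add C g (Neg C g)) f"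
    using assms by (simp add: distr neg_hom)
  also have "\<dots> = Zero C x z" using assms o by (simp add: add_neg comp_zero_l)
  finally show ?thesis using neg_unique assms by blast
qed

lemma neg_zero: "x \<in> Obj C \<Longrightarrow> y \<in> Obj C \<Longrightarrow> Neg C (Zero C x y) = Zero C x y"
  by (metis add_neg zero_add zero_hom neg_hom)

lemma neg_eq_zero: "f \<in> hom C x y \<Longrightarrow> Neg C f = Zero C x y \<Longrightarrow> f = Zero C x y"
  by (metis add_neg add_zero)

end

lemma coker_fact:
  assumes ab: "abelian C" and a: "a \<in> hom C Q P" and p: "p \<in> hom C P F"
    and ex: "exact C a p" and ep: "epi C p"
    and g: "g \<in> hom C P M" and ga: "Comp C g a = Zero C Q M"
  shows "\<exists>u \<in> hom C F M. Comp C u p = g"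
proof -
  have pa: "preadditive C" using ab unfolding abelian_def by blast
  interpret padd C by (rule padd.intro[OF pa])
  obtain k q where k: "is_kernel C p k" and q: "is_cokernel C a q"
    and qk: "Comp C q k = Zero C (Dom C k) (Cod C q)" using ex unfolding exact_def by blast
  obtain g0 where g0: "is_cokernel C g0 p" using ab ep unfolding abelian_def by blast
  have PM: "P \<in> Obj C" "M \<in> Obj C" "Q \<in> Obj C" using g a hom_obj by auto
  have g0h: "g0 \<in> hom C (Dom C g0) P" and X: "Dom C g0 \<in> Obj C"
    using g0 p unfolding is_cokernel_def hom_def apply auto
    using cat unfolding category_def by blast
  have pg0: "Comp C p g0 = Zero C (Dom C g0) F"
    using g0 p unfolding is_cokernel_def hom_def by auto
  have dp: "Dom C p = P" "Cod C p = F" using p unfolding hom_def by auto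
  have "\<forall>x\<in>Obj C. \<forall>g\<in>hom C x P. Comp C p g = Zero C x F \<longrightarrow>
        (\<exists>!u. u \<in> hom C x (Dom C k) \<and> Comp C k u = g)"
    using k dp unfolding is_kernel_def by simp
  then have "\<exists>!u. u \<in> hom C (Dom C g0) (Dom C k) \<and> Comp C k u = g0"
    using X g0h pg0 by blast
  then obtain u where u: "u \<in> hom C (Dom C g0) (Dom C k)" "Comp C k u = g0" by blast
  have kh: "k \<in> hom C (Dom C k) P" using k p unfolding is_kernel_def hom_def by auto
  have qh: "q \<in> hom C P (Cod C q)" using q a unfolding is_cokernel_def hom_def by auto
  have Kq: "Dom C k \<in> Obj C" "Cod C q \<in> Obj C" using kh qh hom_obj by auto
  have da: "Dom C a = Q" "Cod C a = P" using a unfolding hom_def by auto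
  have "\<forall>x\<in>Obj C. \<forall>g\<in>hom C P x. Comp C g a = Zero C Q x \<longrightarrow>
        (\<exists>!u. u \<in> hom C (Cod C q) x \<and> Comp C u q = g)"
    using q da unfolding is_cokernel_def by simp
  then have "\<exists>!v. v \<in> hom C (Cod C q) M \<and> Comp C v q = g"
    using PM g ga by blast
  then obtain v where v: "v \<in> hom C (Cod C q) M" "Comp C v q = g" by blast
  have "Comp C g g0 = Comp C (Comp C v q) (Comp C k u)" using u v by simp
  also have "\<dots> = Comp C v (Comp C q (Comp C k u))"
    using assoc[of "Comp C k u" "Dom C g0" P q "Cod C q" v M] u v kh qh comp by metis
  also have "\<dots> = Comp C v (Comp C (Comp C q k) u)"
    using assoc[of u "Dom C g0" "Dom C k" k P q "Cod C q"] u kh qh by metis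
  also have "\<dots> = Comp C v (Zero C (Dom C g0) (Cod C q))"
    using qk comp_zero_l[of u "Dom C g0" "Dom C k" "Cod C q"] u Kq by simp
  also have "\<dots> = Zero C (Dom C g0) M" using comp_zero_r[of v "Cod C q" M "Dom C g0"] v X by simp
  finally have gg0: "Comp C g g0 = Zero C (Dom C g0) M" .
  have dg0: "Cod C g0 = P" using g0h unfolding hom_def by auto
  have "\<forall>x\<in>Obj C. \<forall>g\<in>hom C P x. Comp C g g0 = Zero C (Dom C g0) x \<longrightarrow>
        (\<exists>!u. u \<in> hom C (Cod C p) x \<and> Comp C u p = g)"
    using g0 dg0 unfolding is_cokernel_def by simp
  then have "\<exists>!w. w \<in> hom C (Cod C p) M \<and> Comp C w p = g"
    using PM g gg0 by blast
  then obtain w where "w \<in> hom C (Cod C p) M" "Comp C w p = g" by blast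
  then show ?thesis using p unfolding hom_def by auto
qed

theorem lemma3p4:
  fixes C :: "('o, 'm) acat"
    and Q1 P1 F1 Q2 P2 F2 M S1 S2 :: 'o
    and a p1 d p2 b c h i1 i2 r1 r2 j1 j2 s1 s2 :: 'm
  assumes ab: "abelian C"
    and a: "a \<in> hom C Q1 P1" and p1: "p1 \<in> hom C P1 F1"
    and d: "d \<in> hom C Q2 P2" and p2: "p2 \<in> hom C P2 F2"
    and b: "b \<in> hom C Q1 Q2" and c: "c \<in> hom C P1 P2" and h: "h \<in> hom C F1 F2"
    and ex1: "exact C a p1" and epi1: "epi C p1"
    and ex2: "exact C d p2" and epi2: "epi C p2"
    and comm1: "Comp C c a = Comp C d b"
    and comm2: "Comp C h p1 = Comp C p2 c"
    and M: "M \<in> Obj C"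
    and S1: "is_biproduct C Q1 Q2 S1 i1 i2 r1 r2"
    and S2: "is_biproduct C P1 Q2 S2 j1 j2 s1 s2"
  shows "let \<mu> = Add C (Comp C j1 (Comp C a r1))
                   (Add C (Comp C j2 (Comp C b r1)) (Neg C (Comp C j2 r2)));
             \<nu> = Add C (Comp C c s1) (Neg C (Comp C d s2))
         in (\<forall>\<psi>' \<in> hom C F1 M. \<exists>\<psi> \<in> hom C F2 M. Comp C \<psi> h = \<psi>')
            \<longleftrightarrow> (\<forall>\<phi> \<in> hom C S2 M. Comp C \<phi> \<mu> = Zero C S1 M \<longrightarrow>
                   (\<exists>\<gamma> \<in> hom C P2 M. Comp C \<gamma> \<nu> = \<phi>))"
proof -
  have pa: "preadditive C" using ab unfolding abelian_def by blast
  interpret padd C by (rule padd.intro[OF pa])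
  have i1: "i1 \<in> hom C Q1 S1" and i2: "i2 \<in> hom C Q2 S1" and r1: "r1 \<in> hom C S1 Q1"
    and r2: "r2 \<in> hom C S1 Q2" and r1i1: "Comp C r1 i1 = Id C Q1" and r2i2: "Comp C r2 i2 = Id C Q2"
    and r1i2: "Comp C r1 i2 = Zero C Q2 Q1" and r2i1: "Comp C r2 i1 = Zero C Q1 Q2"
    using S1 unfolding is_biproduct_def by auto
  have j1: "j1 \<in> hom C P1 S2" and j2: "j2 \<in> hom C Q2 S2" and s1: "s1 \<in> hom C S2 P1"
    and s2: "s2 \<in> hom C S2 Q2" and s1j1: "Comp C s1 j1 = Id C P1" and s2j2: "Comp C s2 j2 = Id C Q2"
    and s1j2: "Comp C s1 j2 = Zero C Q2 P1" and s2j1: "Comp C s2 j1 = Zero C P1 Q2"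
    and js: "Add C (Comp C j1 s1) (Comp C j2 s2) = Id C S2"
    using S2 unfolding is_biproduct_def by auto
  have O: "Q1 \<in> Obj C" "P1 \<in> Obj C" "F1 \<in> Obj C" "Q2 \<in> Obj C" "P2 \<in> Obj C" "F2 \<in> Obj C"
    "S1 \<in> Obj C" "S2 \<in> Obj C"
    using a p1 d p2 i1 j1 hom_obj by auto
  define A where "A = Comp C j1 (Comp C a r1)"
  define B where "B = Comp C j2 (Comp C b r1)"
  define N where "N = Neg C (Comp C j2 r2)"
  define mu where "mu = Add C A (Add C B N)"
  define nu where "nu = Add C (Comp C c s1) (Neg C (Comp C d s2))"
  have ar1: "Comp C a r1 \<in> hom C S1 P1" using comp[OF r1 a] .
  have br1: "Comp C b r1 \<in> hom C S1 Q2" using comp[OF r1 b] .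
  have j2r2: "Comp C j2 r2 \<in> hom C S1 S2" using comp[OF r2 j2] .
  have Ah: "A \<in> hom C S1 S2" unfolding A_def using comp[OF ar1 j1] .
  have Bh: "B \<in> hom C S1 S2" unfolding B_def using comp[OF br1 j2] .
  have Nh: "N \<in> hom C S1 S2" unfolding N_def using neg_hom[OF j2r2] .
  have cs1: "Comp C c s1 \<in> hom C S2 P2" using comp[OF s1 c] .
  have ds2: "Comp C d s2 \<in> hom C S2 P2" using comp[OF s2 d] .
  have Lnu: "Comp C g nu = Add C (Comp C (Comp C g c) s1) (Neg C (Comp C (Comp C g d) s2))"
    if g: "g \<in> hom C P2 M" for g
  proof -
    have "Comp C g nu = Add C (Comp C g (Comp C c s1)) (Comp C g (Neg C (Comp C d s2)))"
      unfolding nu_def using distl[OF cs1 neg_hom[OF ds2] g] .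
    also have "Comp C g (Neg C (Comp C d s2)) = Neg C (Comp C g (Comp C d s2))"
      using comp_neg_r[OF ds2 g] .
    also have "Comp C g (Comp C d s2) = Comp C (Comp C g d) s2" using assoc[OF s2 d g] .
    also have "Comp C g (Comp C c s1) = Comp C (Comp C g c) s1" using assoc[OF s1 c g] .
    finally show ?thesis .
  qed
  have s1mu: "Comp C s1 mu = Comp C a r1"
  proof -
    have "Comp C s1 mu = Add C (Comp C s1 A) (Add C (Comp C s1 B) (Comp C s1 N))"
      unfolding mu_def using distl[OF Ah add_hom[OF Bh Nh] s1] distl[OF Bh Nh s1] by simp
    also have "Comp C s1 A = Comp C a r1"
      unfolding A_def using assoc[OF ar1 j1 s1] s1j1 idl[OF ar1] by simp
    also have "Comp C s1 B = Zero C S1 P1"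
      unfolding B_def using assoc[OF br1 j2 s1] s1j2 comp_zero_l[OF br1] O by simp
    also have "Comp C s1 N = Zero C S1 P1"
      unfolding N_def using comp_neg_r[OF j2r2 s1] assoc[OF r2 j2 s1] s1j2
        comp_zero_l[OF r2] neg_zero O by simp
    finally show ?thesis using zero_add[OF zero_hom] add_zero[OF ar1] O by simp
  qed
  have Lmu: "Comp C f mu = Add C (Comp C (Comp C (Comp C f j1) a) r1)
      (Add C (Comp C (Comp C (Comp C f j2) b) r1) (Neg C (Comp C (Comp C f j2) r2)))"
    if f: "f \<in> hom C S2 M" for f
  proof -
    have "Comp C f mu = Add C (Comp C f A) (Add C (Comp C f B) (Comp C f N))"
      unfolding mu_def using distl[OF Ah add_hom[OF Bh Nh] f] distl[OF Bh Nh f] by simp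
    also have "Comp C f A = Comp C (Comp C (Comp C f j1) a) r1"
      unfolding A_def using assoc[OF ar1 j1 f] assoc[OF r1 a comp[OF j1 f]] by simp
    also have "Comp C f B = Comp C (Comp C (Comp C f j2) b) r1"
      unfolding B_def using assoc[OF br1 j2 f] assoc[OF r1 b comp[OF j2 f]] by simp
    also have "Comp C f N = Neg C (Comp C (Comp C f j2) r2)"
      unfolding N_def using comp_neg_r[OF j2r2 f] assoc[OF r2 j2 f] by simp
    finally show ?thesis .
  qed
  have char2: "(\<forall>\<phi> \<in> hom C S2 M. Comp C \<phi> mu = Zero C S1 M \<longrightarrow>
                   (\<exists>\<gamma> \<in> hom C P2 M. Comp C \<gamma> nu = \<phi>)) \<longleftrightarrow>
     (\<forall>f \<in> hom C P1 M. Comp C f a = Zero C Q1 M \<longrightarrow>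
        (\<exists>\<gamma> \<in> hom C P2 M. Comp C \<gamma> c = f \<and> Comp C \<gamma> d = Zero C Q2 M))"
  proof
    assume H: "\<forall>\<phi> \<in> hom C S2 M. Comp C \<phi> mu = Zero C S1 M \<longrightarrow>
                   (\<exists>\<gamma> \<in> hom C P2 M. Comp C \<gamma> nu = \<phi>)"
    show "\<forall>f \<in> hom C P1 M. Comp C f a = Zero C Q1 M \<longrightarrow>
        (\<exists>\<gamma> \<in> hom C P2 M. Comp C \<gamma> c = f \<and> Comp C \<gamma> d = Zero C Q2 M)"
    proof (intro ballI impI)
      fix f assume f: "f \<in> hom C P1 M" and fa: "Comp C f a = Zero C Q1 M"
      have fs1: "Comp C f s1 \<in> hom C S2 M" using comp[OF s1 f] .
      have "Comp C (Comp C f s1) mu = Comp C f (Comp C s1 mu)"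
        using assoc[OF _ s1 f, of mu S1] Ah Bh Nh unfolding mu_def by (metis add_hom)
      also have "\<dots> = Comp C (Comp C f a) r1" using s1mu assoc[OF r1 a f] by simp
      also have "\<dots> = Zero C S1 M" using fa comp_zero_l[OF r1] M by simp
      finally obtain g where g: "g \<in> hom C P2 M" and gnu: "Comp C g nu = Comp C f s1"
        using H fs1 by blast
      have gc: "g \<in> hom C P2 M \<Longrightarrow> Comp C g c \<in> hom C P1 M" using comp[OF c] by blast
      have gd: "Comp C g d \<in> hom C Q2 M" using comp[OF d g] .
      have gds2: "Comp C (Comp C g d) s2 \<in> hom C S2 M" using comp[OF s2 gd] .
      have e1: "Comp C (Comp C g nu) j1 = Comp C g c"
      proof -
        have "Comp C (Comp C g nu) j1 = Add C (Comp C (Comp C (Comp C g c) s1) j1)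
               (Comp C (Neg C (Comp C (Comp C g d) s2)) j1)"
          using Lnu[OF g] distr[OF j1 comp[OF s1 gc[OF g]] neg_hom[OF gds2]] by simp
        also have "Comp C (Comp C (Comp C g c) s1) j1 = Comp C g c"
          using assoc[OF j1 s1 gc[OF g]] s1j1 idr[OF gc[OF g]] by simp
        also have "Comp C (Neg C (Comp C (Comp C g d) s2)) j1 = Zero C P1 M"
          using comp_neg_l[OF j1 gds2] assoc[OF j1 s2 gd, symmetric] s2j1 comp_zero_r[OF gd] neg_zero O M
          by simp
        finally show ?thesis using add_zero[OF gc[OF g]] by simp
      qed
      have e2: "Comp C (Comp C g nu) j2 = Neg C (Comp C g d)"
      proof -
        have "Comp C (Comp C g nu) j2 = Add C (Comp C (Comp C (Comp C g c) s1) j2)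
               (Comp C (Neg C (Comp C (Comp C g d) s2)) j2)"
          using Lnu[OF g] distr[OF j2 comp[OF s1 gc[OF g]] neg_hom[OF gds2]] by simp
        also have "Comp C (Comp C (Comp C g c) s1) j2 = Zero C Q2 M"
          using assoc[OF j2 s1 gc[OF g]] s1j2 comp_zero_r[OF gc[OF g]] O by simp
        also have "Comp C (Neg C (Comp C (Comp C g d) s2)) j2 = Neg C (Comp C g d)"
          using comp_neg_l[OF j2 gds2] assoc[OF j2 s2 gd] s2j2 idr[OF gd] by simp
        finally show ?thesis using zero_add[OF neg_hom[OF gd]] by simp
      qed
      have "Comp C (Comp C f s1) j1 = f" using assoc[OF j1 s1 f] s1j1 idr[OF f] by simp
      moreover have "Comp C (Comp C f s1) j2 = Zero C Q2 M"
        using assoc[OF j2 s1 f] s1j2 comp_zero_r[OF f] O by simp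
      ultimately have "Comp C g c = f" "Neg C (Comp C g d) = Zero C Q2 M"
        using e1 e2 gnu by auto
      then show "\<exists>\<gamma> \<in> hom C P2 M. Comp C \<gamma> c = f \<and> Comp C \<gamma> d = Zero C Q2 M"
        using g neg_eq_zero[OF gd] by blast
    qed
  next
    assume H: "\<forall>f \<in> hom C P1 M. Comp C f a = Zero C Q1 M \<longrightarrow>
        (\<exists>\<gamma> \<in> hom C P2 M. Comp C \<gamma> c = f \<and> Comp C \<gamma> d = Zero C Q2 M)"
    show "\<forall>\<phi> \<in> hom C S2 M. Comp C \<phi> mu = Zero C S1 M \<longrightarrow>
                   (\<exists>\<gamma> \<in> hom C P2 M. Comp C \<gamma> nu = \<phi>)"
    proof (intro ballI impI)
      fix f assume f: "f \<in> hom C S2 M" and fmu: "Comp C f mu = Zero C S1 M"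
      have fj1: "Comp C f j1 \<in> hom C P1 M" using comp[OF j1 f] .
      have fj2: "Comp C f j2 \<in> hom C Q2 M" using comp[OF j2 f] .
      have al: "Comp C (Comp C f j1) a \<in> hom C Q1 M" using comp[OF a fj1] .
      have be: "Comp C (Comp C f j2) b \<in> hom C Q1 M" using comp[OF b fj2] .
      define X where "X = Add C (Comp C (Comp C (Comp C f j1) a) r1)
        (Add C (Comp C (Comp C (Comp C f j2) b) r1) (Neg C (Comp C (Comp C f j2) r2)))"
      have X0: "X = Zero C S1 M" using Lmu[OF f] fmu X_def by simp
      have t1: "Comp C (Comp C (Comp C f j1) a) r1 \<in> hom C S1 M" using comp[OF r1 al] .
      have t2: "Comp C (Comp C (Comp C f j2) b) r1 \<in> hom C S1 M" using comp[OF r1 be] .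
      have t3: "Comp C (Comp C f j2) r2 \<in> hom C S1 M" using comp[OF r2 fj2] .
      have "Comp C X i2 = Add C (Comp C (Comp C (Comp C (Comp C f j1) a) r1) i2)
        (Add C (Comp C (Comp C (Comp C (Comp C f j2) b) r1) i2) (Comp C (Neg C (Comp C (Comp C f j2) r2)) i2))"
        unfolding X_def using distr[OF i2 t1 add_hom[OF t2 neg_hom[OF t3]]] distr[OF i2 t2 neg_hom[OF t3]]
        by simp
      also have "Comp C (Comp C (Comp C (Comp C f j1) a) r1) i2 = Zero C Q2 M"
        using assoc[OF i2 r1 al] r1i2 comp_zero_r[OF al] O by simp
      also have "Comp C (Comp C (Comp C (Comp C f j2) b) r1) i2 = Zero C Q2 M"
        using assoc[OF i2 r1 be] r1i2 comp_zero_r[OF be] O by simp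
      also have "Comp C (Neg C (Comp C (Comp C f j2) r2)) i2 = Neg C (Comp C f j2)"
        using comp_neg_l[OF i2 t3] assoc[OF i2 r2 fj2] r2i2 idr[OF fj2] by simp
      finally have "Comp C X i2 = Neg C (Comp C f j2)"
        using zero_add[OF neg_hom[OF fj2]] zero_add[OF zero_hom] O M by simp
      moreover have "Comp C X i2 = Zero C Q2 M" using X0 comp_zero_l[OF i2] M by simp
      ultimately have fj2z: "Comp C f j2 = Zero C Q2 M" using neg_eq_zero[OF fj2] by simp
      have bez: "Comp C (Comp C f j2) b = Zero C Q1 M" using fj2z comp_zero_l[OF b] M by simp
      have X': "X = Comp C (Comp C (Comp C f j1) a) r1"
        unfolding X_def using bez fj2z comp_zero_l[OF r1] comp_zero_l[OF r2] neg_zero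
          zero_add[OF zero_hom] add_zero[OF t1] O M by simp
      have "Comp C (Comp C f j1) a = Comp C X i1"
        using X' assoc[OF i1 r1 al] r1i1 idr[OF al] by simp
      also have "\<dots> = Zero C Q1 M" using X0 comp_zero_l[OF i1] M by simp
      finally obtain g where g: "g \<in> hom C P2 M" and gc: "Comp C g c = Comp C f j1"
        and gd: "Comp C g d = Zero C Q2 M" using H fj1 by blast
      have "f = Comp C f (Id C S2)" using idr[OF f] by simp
      also have "\<dots> = Add C (Comp C (Comp C f j1) s1) (Comp C (Comp C f j2) s2)"
        using js[symmetric] distl[OF comp[OF s1 j1] comp[OF s2 j2] f] assoc[OF s1 j1 f]
          assoc[OF s2 j2 f] by simp
      also have "\<dots> = Add C (Comp C (Comp C f j1) s1) (Zero C S2 M)"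
        using fj2z comp_zero_l[OF s2] M by simp
      also have "\<dots> = Comp C g nu"
        using Lnu[OF g] gc gd comp_zero_l[OF s2] neg_zero O M by simp
      finally show "\<exists>\<gamma> \<in> hom C P2 M. Comp C \<gamma> nu = f" using g by metis
    qed
  qed
  have char1: "(\<forall>\<psi>' \<in> hom C F1 M. \<exists>\<psi> \<in> hom C F2 M. Comp C \<psi> h = \<psi>') \<longleftrightarrow>
     (\<forall>f \<in> hom C P1 M. Comp C f a = Zero C Q1 M \<longrightarrow>
        (\<exists>\<gamma> \<in> hom C P2 M. Comp C \<gamma> c = f \<and> Comp C \<gamma> d = Zero C Q2 M))"
  proof
    assume H: "\<forall>\<psi>' \<in> hom C F1 M. \<exists>\<psi> \<in> hom C F2 M. Comp C \<psi> h = \<psi>'"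
    show "\<forall>f \<in> hom C P1 M. Comp C f a = Zero C Q1 M \<longrightarrow>
        (\<exists>\<gamma> \<in> hom C P2 M. Comp C \<gamma> c = f \<and> Comp C \<gamma> d = Zero C Q2 M)"
    proof (intro ballI impI)
      fix f assume f: "f \<in> hom C P1 M" and fa: "Comp C f a = Zero C Q1 M"
      obtain u where u: "u \<in> hom C F1 M" "Comp C u p1 = f"
        using coker_fact[OF ab a p1 ex1 epi1 f fa] by blast
      obtain ps where ps: "ps \<in> hom C F2 M" "Comp C ps h = u" using H u by blast
      have p2d: "Comp C p2 d = Zero C Q2 F2" using ex2 d p2 unfolding exact_def hom_def by auto
      have "Comp C (Comp C ps p2) c = Comp C ps (Comp C h p1)"
        using assoc[OF c p2 ps(1)] comm2 by simp
      also have "\<dots> = f" using assoc[OF p1 h ps(1)] ps u by simp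
      finally have 1: "Comp C (Comp C ps p2) c = f" .
      have "Comp C (Comp C ps p2) d = Zero C Q2 M"
        using assoc[OF d p2 ps(1)] p2d comp_zero_r[OF ps(1)] O by simp
      then show "\<exists>\<gamma> \<in> hom C P2 M. Comp C \<gamma> c = f \<and> Comp C \<gamma> d = Zero C Q2 M"
        using 1 comp[OF p2 ps(1)] by blast
    qed
  next
    assume H: "\<forall>f \<in> hom C P1 M. Comp C f a = Zero C Q1 M \<longrightarrow>
        (\<exists>\<gamma> \<in> hom C P2 M. Comp C \<gamma> c = f \<and> Comp C \<gamma> d = Zero C Q2 M)"
    show "\<forall>\<psi>' \<in> hom C F1 M. \<exists>\<psi> \<in> hom C F2 M. Comp C \<psi> h = \<psi>'"
    proof
      fix u assume u: "u \<in> hom C F1 M"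
      have p1a: "Comp C p1 a = Zero C Q1 F1" using ex1 a p1 unfolding exact_def hom_def by auto
      have up: "Comp C u p1 \<in> hom C P1 M" using comp[OF p1 u] .
      have "Comp C (Comp C u p1) a = Zero C Q1 M"
        using assoc[OF a p1 u] p1a comp_zero_r[OF u] O by simp
      then obtain g where g: "g \<in> hom C P2 M" "Comp C g c = Comp C u p1" "Comp C g d = Zero C Q2 M"
        using H up by blast
      obtain ps where ps: "ps \<in> hom C F2 M" "Comp C ps p2 = g"
        using coker_fact[OF ab d p2 ex2 epi2 g(1) g(3)] by blast
      have psh: "Comp C ps h \<in> hom C F1 M" using comp[OF h ps(1)] .
      have "Comp C (Comp C ps h) p1 = Comp C ps (Comp C p2 c)"
        using assoc[OF p1 h ps(1)] comm2 by simp
      also have "\<dots> = Comp C u p1" using assoc[OF c p2 ps(1)] ps g by simp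
      finally have eq: "Comp C (Comp C ps h) p1 = Comp C u p1" .
      have cp1: "Cod C p1 = F1" using p1 unfolding hom_def by auto
      have "Comp C ps h = u" using epi1 eq psh u M cp1 unfolding epi_def by auto
      then show "\<exists>\<psi> \<in> hom C F2 M. Comp C \<psi> h = u" using ps by blast
    qed
  qed
  show ?thesis unfolding Let_def A_def[symmetric] B_def[symmetric] N_def[symmetric]
      mu_def[symmetric] nu_def[symmetric] using char1 char2 by simp
qed

end
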